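(* Let $n\ge2$, $R>0$, $\varepsilon>0$, and let $f$ be such that $r^{n-1}f\in L^1((0,R))$. Then the problem $-\varepsilon r^{n-1}\Big(\frac{1}{r^{n-1}}w_r\Big)_r+\frac{1}{n r^{n(n-1)}}w^n=L_f$ in $(0,R)$, $w(0)=w_r(0)=0$, $w_r(R)=\varepsilon R^{n-1}$, has at most one nonnegative classical solution.
   Context: $L_f(s):=\int_0^s t^{n-1}f(t)\,dt$. Subscripts $r$ denote derivatives in $r$. A classical solution is a twice differentiable function on $(0,R)$, continuously differentiable up to the endpoints, satisfying the equation and boundary conditions pointwise. (This problem is satisfied by $w=r^{n-1}u^\varepsilon_r$ for radial vanishing moment approximations $u^\varepsilon$ of the Monge–Ampère equation.) *)

theory Defs
  imports "HOL-Analysis.Analysis"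
begin

definition Lf :: "nat \<Rightarrow> (real \<Rightarrow> real) \<Rightarrow> real \<Rightarrow> real" where
  "Lf n f s = integral {0..s} (\<lambda>t. t ^ (n - 1) * f t)"

definition classical_solution ::
  "nat \<Rightarrow> real \<Rightarrow> real \<Rightarrow> (real \<Rightarrow> real) \<Rightarrow> (real \<Rightarrow> real) \<Rightarrow> bool" where
  "classical_solution n \<epsilon> R f w \<longleftrightarrow>
     (\<exists>w'. (\<forall>r\<in>{0..R}. (w has_real_derivative w' r) (at r within {0..R}))
        \<and> continuous_on {0..R} w'
        \<and> (\<forall>r\<in>{0<..<R}. w' differentiable (at r))
        \<and> (\<forall>r\<in>{0<..<R}.
              - \<epsilon> * r ^ (n - 1) * deriv (\<lambda>s. w' s / s ^ (n - 1)) r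
              + w r ^ n / (real n * r ^ (n * (n - 1))) = Lf n f r)
        \<and> w 0 = 0 \<and> w' 0 = 0 \<and> w' R = \<epsilon> * R ^ (n - 1))"

end

theory Submission
  imports Defs
begin

lemma core:
  fixes u u' V D :: "real \<Rightarrow> real" and R :: real and k :: nat
  assumes R: "R > 0"
    and du: "\<forall>r\<in>{0..R}. (u has_real_derivative u' r) (at r within {0..R})"
    and cu': "continuous_on {0..R} u'"
    and Vdef: "\<And>s. V s = u' s / s ^ k"
    and dV: "\<And>r. r \<in> {0<..<R} \<Longrightarrow> (V has_real_derivative D r) (at r)"
    and sgn: "\<And>r. r \<in> {0<..<R} \<Longrightarrow> u r > 0 \<Longrightarrow> D r > 0"
    and u0: "u 0 = 0" and u'R: "u' R = 0"
  shows "\<forall>r\<in>{0..R}. u r \<le> 0"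
proof (rule ccontr)
  assume "\<not> ?thesis"
  then obtain r1 where r1: "r1 \<in> {0..R}" "u r1 > 0" by force
  have cu: "continuous_on {0..R} u"
    unfolding continuous_on_eq_continuous_within using du DERIV_continuous by blast
  obtain r0 where r0: "r0 \<in> {0..R}" "\<And>y. y \<in> {0..R} \<Longrightarrow> u y \<le> u r0"
    using continuous_attains_sup[OF compact_Icc _ cu] R by fastforce
  have ur0: "u r0 > 0" using r0 r1 by force
  have r0pos: "r0 > 0" using r0 ur0 u0 by (cases "r0 = 0") auto
  have "continuous (at r0 within {0..R}) u"
    using cu r0(1) continuous_on_eq_continuous_within by blast
  then obtain d where d: "d > 0" "\<And>y. y \<in> {0..R} \<Longrightarrow> dist y r0 < d \<Longrightarrow> u y > 0"
  proof -
    obtain d where "d > 0" "\<forall>y\<in>{0..R}. dist y r0 < d \<longrightarrow> dist (u y) (u r0) < u r0"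
      using \<open>continuous (at r0 within {0..R}) u\<close> ur0 unfolding continuous_within_eps_delta by blast
    thus ?thesis using that by (fastforce simp: dist_real_def)
  qed
  have udiff: "\<And>x. 0 < x \<Longrightarrow> x < R \<Longrightarrow> (u has_real_derivative u' x) (at x)"
  proof -
    fix x :: real assume x: "0 < x" "x < R"
    have "(u has_real_derivative u' x) (at x within {0..R})" using du x by simp
    thus "(u has_real_derivative u' x) (at x)" using at_within_Icc_at[of 0 x R] x by simp
  qed
  have Vcont: "\<And>a b. 0 < a \<Longrightarrow> b \<le> R \<Longrightarrow> continuous_on {a..b} V"
  proof -
    fix a b :: real assume "0 < a" "b \<le> R"
    have "continuous_on {a..b} u'" using cu' continuous_on_subset \<open>0<a\<close> \<open>b \<le> R\<close> by fastforce
    moreover have "continuous_on {a..b} (\<lambda>s. s ^ k :: real)" by (intro continuous_intros)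
    ultimately have "continuous_on {a..b} (\<lambda>s. u' s / s ^ k)"
      using \<open>0<a\<close> by (intro continuous_on_divide) auto
    thus "continuous_on {a..b} V" using Vdef by simp
  qed
  have Vmono: "\<And>a b. 0 < a \<Longrightarrow> a < b \<Longrightarrow> b \<le> R \<Longrightarrow> (\<forall>x. a < x \<and> x < b \<longrightarrow> u x > 0) \<Longrightarrow> V a < V b"
  proof -
    fix a b :: real assume ab: "0 < a" "a < b" "b \<le> R" "\<forall>x. a < x \<and> x < b \<longrightarrow> u x > 0"
    have "\<And>x. a < x \<Longrightarrow> x < b \<Longrightarrow> V differentiable at x"
      using dV ab real_differentiable_def by (metis greaterThanLessThan_iff less_trans order_less_le_trans)
    then obtain l z where z: "a < z" "z < b" "(V has_real_derivative l) (at z)" "V b - V a = (b - a) * l"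
      using MVT[OF ab(2) Vcont[OF ab(1) ab(3)]] by blast
    have "z \<in> {0<..<R}" using z ab by auto
    hence "l = D z" using dV z(3) DERIV_unique by blast
    moreover have "D z > 0" using sgn \<open>z \<in> {0<..<R}\<close> ab z by auto
    ultimately have "(b - a) * l > 0" using ab by simp
    thus "V a < V b" using z(4) by linarith
  qed
  show False
  proof (cases "r0 < R")
    case True
    have "u' r0 = 0"
    proof (rule DERIV_local_max[OF udiff[OF r0pos True]])
      show "0 < min r0 (R - r0)" using r0pos True by simp
      show "\<forall>y. \<bar>r0 - y\<bar> < min r0 (R - r0) \<longrightarrow> u y \<le> u r0"
      proof (intro allI impI)
        fix y assume "\<bar>r0 - y\<bar> < min r0 (R - r0)"
        hence "y \<in> {0..R}" by (auto simp: abs_less_iff)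
        thus "u y \<le> u r0" using r0(2) by blast
      qed
    qed
    hence V0: "V r0 = 0" using Vdef by simp
    define b where "b = min (r0 + d/2) ((r0 + R)/2)"
    have b: "r0 < b" "b < R" using d(1) True unfolding b_def by (auto simp: min_def)
    have pos: "\<And>x. r0 \<le> x \<Longrightarrow> x \<le> b \<Longrightarrow> u x > 0"
    proof -
      fix x assume x: "r0 \<le> x" "x \<le> b"
      have "x - r0 < d" using x d(1) True unfolding b_def by (auto simp: min_def split: if_splits)
      thus "u x > 0" using d(2)[of x] x b r0pos by (auto simp: dist_real_def)
    qed
    have "\<And>x. r0 < x \<Longrightarrow> x < b \<Longrightarrow> u differentiable at x"
      using udiff r0pos b real_differentiable_def by (meson less_trans)
    moreover have "continuous_on {r0..b} u" using cu continuous_on_subset r0pos b by fastforce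
    ultimately obtain l z where z: "r0 < z" "z < b" "(u has_real_derivative l) (at z)" "u b - u r0 = (b - r0) * l"
      using MVT[OF b(1)] by blast
    have lz: "l = u' z" using udiff[of z] z r0pos b DERIV_unique by auto
    moreover have "V r0 < V z" using Vmono[of r0 z] z b r0pos pos by auto
    hence "u' z / z ^ k > 0" using V0 Vdef[of z] by linarith
    hence "u' z > 0" using z r0pos by (simp add: zero_less_divide_iff)
    ultimately have "(b - r0) * u' z > 0" using z by simp
    hence "u b > u r0" using z lz by simp
    thus False using r0(2)[of b] b r0pos by auto
  next
    case False
    hence rR: "r0 = R" using r0 by auto
    define a where "a = max (R - d/2) (R/2)"
    have a: "0 < a" "a < R" using d(1) R unfolding a_def by (auto simp: max_def)
    have pos: "\<And>x. a \<le> x \<Longrightarrow> x \<le> R \<Longrightarrow> u x > 0"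
    proof -
      fix x assume x: "a \<le> x" "x \<le> R"
      have "R - x < d" using x d(1) R unfolding a_def by (auto simp: max_def split: if_splits)
      thus "u x > 0" using d(2)[of x] x a rR by (auto simp: dist_real_def)
    qed
    have "\<And>x. a < x \<Longrightarrow> x < R \<Longrightarrow> u differentiable at x"
      using udiff a real_differentiable_def by (meson less_trans)
    moreover have "continuous_on {a..R} u" using cu continuous_on_subset a by fastforce
    ultimately obtain l z where z: "a < z" "z < R" "(u has_real_derivative l) (at z)" "u R - u a = (R - a) * l"
      using MVT[OF a(2)] by blast
    have lz: "l = u' z" using udiff[of z] z a DERIV_unique by auto
    have "V z < V R" using Vmono[of z R] z a pos by auto
    moreover have "V R = 0" using u'R Vdef[of R] by simp
    ultimately have "u' z / z ^ k < 0" using Vdef[of z] by linarith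
    hence "u' z < 0" using z a by (simp add: divide_less_0_iff)
    hence "(R - a) * u' z < 0" using a by (simp add: mult_pos_neg)
    hence "u a > u R" using z lz by simp
    thus False using r0(2)[of a] a rR by auto
  qed
qed

lemma pair:
  fixes n :: nat and R \<epsilon> :: real and f w1 w2 :: "real \<Rightarrow> real"
  assumes n: "n \<ge> 2" and R: "R > 0" and e: "\<epsilon> > 0"
    and s1: "classical_solution n \<epsilon> R f w1" and p1: "\<forall>r\<in>{0..R}. w1 r \<ge> 0"
    and s2: "classical_solution n \<epsilon> R f w2" and p2: "\<forall>r\<in>{0..R}. w2 r \<ge> 0"
  shows "\<forall>r\<in>{0..R}. w1 r - w2 r \<le> 0"
proof -
  obtain w1' where A: "\<forall>r\<in>{0..R}. (w1 has_real_derivative w1' r) (at r within {0..R})"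
        "continuous_on {0..R} w1'" "\<forall>r\<in>{0<..<R}. w1' differentiable (at r)"
        "\<forall>r\<in>{0<..<R}. - \<epsilon> * r ^ (n - 1) * deriv (\<lambda>s. w1' s / s ^ (n - 1)) r
              + w1 r ^ n / (real n * r ^ (n * (n - 1))) = Lf n f r"
        "w1 0 = 0" "w1' 0 = 0" "w1' R = \<epsilon> * R ^ (n - 1)"
    using s1 unfolding classical_solution_def by blast
  obtain w2' where B: "\<forall>r\<in>{0..R}. (w2 has_real_derivative w2' r) (at r within {0..R})"
        "continuous_on {0..R} w2'" "\<forall>r\<in>{0<..<R}. w2' differentiable (at r)"
        "\<forall>r\<in>{0<..<R}. - \<epsilon> * r ^ (n - 1) * deriv (\<lambda>s. w2' s / s ^ (n - 1)) r
              + w2 r ^ n / (real n * r ^ (n * (n - 1))) = Lf n f r"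
        "w2 0 = 0" "w2' 0 = 0" "w2' R = \<epsilon> * R ^ (n - 1)"
    using s2 unfolding classical_solution_def by blast
  define v1 where "v1 = (\<lambda>s. w1' s / s ^ (n - 1))"
  define v2 where "v2 = (\<lambda>s. w2' s / s ^ (n - 1))"
  have dv: "\<And>v w'. v = (\<lambda>s. w' s / s ^ (n - 1)) \<Longrightarrow> (\<forall>r\<in>{0<..<R}. w' differentiable (at r))
      \<Longrightarrow> r \<in> {0<..<R} \<Longrightarrow> (v has_real_derivative deriv v r) (at r)" for r
  proof -
    fix v w' assume v: "v = (\<lambda>s. w' s / s ^ (n - 1))" and d: "\<forall>r\<in>{0<..<R}. w' differentiable (at r)"
      and r: "r \<in> {0<..<R}"
    have "(\<lambda>s. s ^ (n - 1) :: real) differentiable (at r)"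
      by (intro differentiable_power differentiable_ident)
    moreover have "r ^ (n - 1) \<noteq> 0" using r by simp
    ultimately have "v differentiable (at r)" using d r unfolding v
      by (intro differentiable_divide) auto
    thus "(v has_real_derivative deriv v r) (at r)"
      using DERIV_deriv_iff_real_differentiable by blast
  qed
  show ?thesis
  proof (rule core[where u' = "\<lambda>r. w1' r - w2' r" and k = "n - 1"
        and V = "\<lambda>s. v1 s - v2 s" and D = "\<lambda>r. deriv v1 r - deriv v2 r"])
    show "0 < R" by fact
    show "\<forall>r\<in>{0..R}. ((\<lambda>r. w1 r - w2 r) has_real_derivative w1' r - w2' r) (at r within {0..R})"
      using A(1) B(1) by (auto intro: DERIV_diff)
    show "continuous_on {0..R} (\<lambda>r. w1' r - w2' r)" using A(2) B(2) by (intro continuous_on_diff)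
    show "\<And>s. v1 s - v2 s = (w1' s - w2' s) / s ^ (n - 1)"
      unfolding v1_def v2_def by (simp add: diff_divide_distrib)
    show "\<And>r. r \<in> {0<..<R} \<Longrightarrow> ((\<lambda>s. v1 s - v2 s) has_real_derivative deriv v1 r - deriv v2 r) (at r)"
      using dv[OF v1_def A(3)] dv[OF v2_def B(3)] by (auto intro: DERIV_diff)
    show "0 < deriv v1 r - deriv v2 r" if r: "r \<in> {0<..<R}" and pos: "0 < w1 r - w2 r" for r
    proof -
      have e1: "- \<epsilon> * r ^ (n - 1) * deriv v1 r + w1 r ^ n / (real n * r ^ (n * (n - 1))) = Lf n f r"
        using A(4) r unfolding v1_def by blast
      have e2: "- \<epsilon> * r ^ (n - 1) * deriv v2 r + w2 r ^ n / (real n * r ^ (n * (n - 1))) = Lf n f r"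
        using B(4) r unfolding v2_def by blast
      have "w2 r \<ge> 0" using p2 r by auto
      hence "w2 r ^ n < w1 r ^ n" using pos n by (intro power_strict_mono) auto
      moreover have "real n * r ^ (n * (n - 1)) > 0" using r n by auto
      ultimately have q: "w2 r ^ n / (real n * r ^ (n * (n - 1))) < w1 r ^ n / (real n * r ^ (n * (n - 1)))"
        by (simp add: divide_strict_right_mono)
      have "\<epsilon> * r ^ (n - 1) * (deriv v1 r - deriv v2 r) = w1 r ^ n / (real n * r ^ (n * (n - 1))) - w2 r ^ n / (real n * r ^ (n * (n - 1)))"
        using e1 e2 by (simp add: algebra_simps)
      hence "\<epsilon> * r ^ (n - 1) * (deriv v1 r - deriv v2 r) > 0" using q by linarith
      moreover have "\<epsilon> * r ^ (n - 1) > 0" using e r by simp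
      ultimately show ?thesis using zero_less_mult_pos by blast
    qed
    show "w1 0 - w2 0 = 0" using A(5) B(5) by simp
    show "w1' R - w2' R = 0" using A(7) B(7) by simp
  qed
qed

theorem theorem3p3:
  fixes n :: nat and R \<epsilon> :: real and f :: "real \<Rightarrow> real"
  assumes "n \<ge> 2" and "R > 0" and "\<epsilon> > 0"
    and "(\<lambda>t. t ^ (n - 1) * f t) absolutely_integrable_on {0<..<R}"
  shows "\<forall>w1 w2. classical_solution n \<epsilon> R f w1 \<and> (\<forall>r\<in>{0..R}. w1 r \<ge> 0)
            \<and> classical_solution n \<epsilon> R f w2 \<and> (\<forall>r\<in>{0..R}. w2 r \<ge> 0)
            \<longrightarrow> (\<forall>r\<in>{0..R}. w1 r = w2 r)"
proof (intro allI impI)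
  fix w1 w2 assume h: "classical_solution n \<epsilon> R f w1 \<and> (\<forall>r\<in>{0..R}. w1 r \<ge> 0)
            \<and> classical_solution n \<epsilon> R f w2 \<and> (\<forall>r\<in>{0..R}. w2 r \<ge> 0)"
  have "\<forall>r\<in>{0..R}. w1 r - w2 r \<le> 0" using pair[OF assms(1-3)] h by blast
  moreover have "\<forall>r\<in>{0..R}. w2 r - w1 r \<le> 0" using pair[OF assms(1-3)] h by blast
  ultimately show "\<forall>r\<in>{0..R}. w1 r = w2 r" by force
qed

end
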